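(* Consider the following game over slots $1,\dots,T$ with $N\ge2$ users. The BS chooses a pmf $\mathbf p=(p_1,\dots,p_N)$ and in every slot, independently, schedules user $i$ with probability $p_i$. The adversary chooses a blocking matrix $\sigma\in\{0,1\}^{N\times T}$, where $\sigma_i(t)=0$ means user $i$ is blocked in slot $t$. Feasibility means $\sum_{i,t}(1-\sigma_i(t))\le\alpha T$ and at most one user is blocked per slot, where $0<\alpha<1$. Ages satisfy $a_i(1)=1$ and $a_i(t+1)=1$ if user $i$ is scheduled and not blocked in slot $t$, and $a_i(t+1)=a_i(t)+1$ otherwise. The payoff is $\Delta^{\mathbf p,\sigma}=\frac1T\sum_{t=1}^T\frac1N\sum_i\mathbb E[a_i(t)]$; the BS minimizes it and the adversary maximizes it. Then, for all sufficiently large $T$ with $\alpha T\in\mathbb Z$, this game has no Nash equilibrium. That is, there is no pair $(\bar{\mathbf p},\bar\sigma)$ with $\Delta^{\bar{\mathbf p},\bar\sigma}\le\Delta^{\mathbf p,\bar\sigma}$ for all pmfs $\mathbf p$ and $\Delta^{\bar{\mathbf p},\bar\sigma}\ge\Delta^{\bar{\mathbf p},\sigma}$ for all feasible $\sigma$. *)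

theory Defs
  imports "HOL-Probability.Probability"
begin

(* Users are 0..N-1, slots are 1..T.
   A blocking matrix is sigma :: nat => nat => bool, where  sigma i t = True  means
   sigma_i(t) = 1 (user i NOT blocked in slot t) and False means blocked.
   A schedule is s :: nat => nat, s t = user scheduled in slot t. *)

(* age s i t = a_i(t) for t >= 1; the value at t = 0 is an unused dummy *)
fun age :: "(nat \<Rightarrow> nat \<Rightarrow> bool) \<Rightarrow> (nat \<Rightarrow> nat) \<Rightarrow> nat \<Rightarrow> nat \<Rightarrow> nat" where
  "age \<sigma> s i 0 = 1"
| "age \<sigma> s i (Suc 0) = 1"
| "age \<sigma> s i (Suc (Suc t)) =
     (if s (Suc t) = i \<and> \<sigma> i (Suc t) then 1 else age \<sigma> s i (Suc t) + 1)"

definition user_pmf :: "nat \<Rightarrow> nat pmf \<Rightarrow> bool" where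
  "user_pmf N p \<longleftrightarrow> set_pmf p \<subseteq> {..<N}"

definition sched_pmf :: "nat \<Rightarrow> nat pmf \<Rightarrow> (nat \<Rightarrow> nat) pmf" where
  "sched_pmf T p = Pi_pmf {1..T} 0 (\<lambda>_. p)"

definition feasible :: "nat \<Rightarrow> nat \<Rightarrow> real \<Rightarrow> (nat \<Rightarrow> nat \<Rightarrow> bool) \<Rightarrow> bool" where
  "feasible N T \<alpha> \<sigma> \<longleftrightarrow>
     real (card {(i, t). i < N \<and> t \<in> {1..T} \<and> \<not> \<sigma> i t}) \<le> \<alpha> * real T \<and>
     (\<forall>t\<in>{1..T}. \<forall>i<N. \<forall>j<N. \<not> \<sigma> i t \<and> \<not> \<sigma> j t \<longrightarrow> i = j)"

definition payoff :: "nat \<Rightarrow> nat \<Rightarrow> nat pmf \<Rightarrow> (nat \<Rightarrow> nat \<Rightarrow> bool) \<Rightarrow> real" where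
  "payoff N T p \<sigma> =
     (1 / real T) * (\<Sum>t = 1..T. (1 / real N) *
        (\<Sum>i<N. measure_pmf.expectation (sched_pmf T p) (\<lambda>s. real (age \<sigma> s i t))))"

end

theory Submission
  imports Defs
begin


lemma age_local: "(\<forall>u<t. s u = s' u) \<Longrightarrow> age \<sigma> s i t = age \<sigma> s' i t"
  by (induction \<sigma> s i t rule: age.induct) auto

fun ee :: "real \<Rightarrow> (nat \<Rightarrow> bool) \<Rightarrow> nat \<Rightarrow> real" where
  "ee x b 0 = 1"
| "ee x b (Suc 0) = 1"
| "ee x b (Suc (Suc t)) = 1 + (if b (Suc t) then 1 - x else 1) * ee x b (Suc t)"

lemma exp_pair_prod:
  assumes "finite (set_pmf A)" "finite (set_pmf B)"
  shows "measure_pmf.expectation (pair_pmf A B) (\<lambda>z. u (fst z) * v (snd z)) =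
         measure_pmf.expectation A u * measure_pmf.expectation B (v :: _ \<Rightarrow> real)"
proof -
  have "measure_pmf.expectation (pair_pmf A B) (\<lambda>z. u (fst z) * v (snd z)) =
     (\<Sum>z\<in>set_pmf A \<times> set_pmf B. u (fst z) * v (snd z) * pmf (pair_pmf A B) z)"
    by (rule integral_measure_pmf_real) (use assms in auto)
  also have "\<dots> = (\<Sum>a\<in>set_pmf A. \<Sum>b\<in>set_pmf B. (u a * pmf A a) * (v b * pmf B b))"
    by (simp add: sum.cartesian_product case_prod_unfold mult_ac)
       (intro sum.cong refl, metis pmf_pair prod.collapse)
  also have "\<dots> = (\<Sum>a\<in>set_pmf A. u a * pmf A a) * (\<Sum>b\<in>set_pmf B. v b * pmf B b)"
    by (simp add: sum_product)
  also have "\<dots> = measure_pmf.expectation A u * measure_pmf.expectation B v"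
    by (subst (1 2) integral_measure_pmf_real) (use assms in auto)
  finally show ?thesis .
qed

lemma exp_ind:
  assumes "finite (set_pmf p)"
  shows "measure_pmf.expectation p (\<lambda>y. if y = i \<and> c then 0 else 1) = (if c then 1 - pmf p i else (1::real))"
proof -
  have "measure_pmf.expectation p (\<lambda>y. if y = i \<and> c then 0 else 1) =
        (\<Sum>a\<in>insert i (set_pmf p). (if a = i \<and> c then 0 else 1) * pmf p a)"
    by (rule integral_measure_pmf_real) (use assms in auto)
  also have "\<dots> = (\<Sum>a\<in>insert i (set_pmf p). pmf p a) - (if c then pmf p i else 0)"
    using assms by (auto simp: sum.remove[of _ i] sum_subtractf[symmetric] intro!: sum.cong split: if_splits)
  also have "(\<Sum>a\<in>insert i (set_pmf p). pmf p a) = 1"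
    using assms by (intro sum_pmf_eq_1) auto
  finally show ?thesis by simp
qed

lemma fin_Pi: "finite A \<Longrightarrow> finite (set_pmf p) \<Longrightarrow> finite (set_pmf (Pi_pmf A d (\<lambda>_. p)))"
  by (rule finite_subset[OF set_Pi_pmf_subset']) (auto intro!: finite_PiE_dflt)

lemma exp_age:
  assumes fin: "finite (set_pmf p)"
  shows "finite A \<Longrightarrow> (\<forall>u. 1 \<le> u \<and> u < t \<longrightarrow> u \<in> A) \<Longrightarrow>
     measure_pmf.expectation (Pi_pmf A 0 (\<lambda>_. p)) (\<lambda>s. real (age \<sigma> s i t)) = ee (pmf p i) (\<sigma> i) t"
proof (induction t arbitrary: A rule: less_induct)
  case (less t)
  show ?case
  proof (cases t)
    case 0 then show ?thesis by simp
  next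
    case (Suc n)
    show ?thesis
    proof (cases n)
      case 0 then show ?thesis using Suc by simp
    next
      case (Suc k)
      define m where "m = Suc k"
      have t: "t = Suc m" using Suc \<open>t = Suc n\<close> m_def by simp
      have mA: "m \<in> A" using less.prems t m_def by auto
      define A' where "A' = A - {m}"
      have A: "A = insert m A'" using mA A'_def by auto
      have finA': "finite A'" using less.prems A'_def by auto
      have IH: "measure_pmf.expectation (Pi_pmf A' 0 (\<lambda>_. p)) (\<lambda>s. real (age \<sigma> s i m)) = ee (pmf p i) (\<sigma> i) m"
        using less.IH[of m A'] t finA' less.prems A'_def by auto
      have eq: "real (age \<sigma> (f(m := y)) i t) =
          (if y = i \<and> \<sigma> i m then 0 else 1) * real (age \<sigma> f i m) + 1" for f y
      proof -
        have "age \<sigma> (f(m := y)) i m = age \<sigma> f i m" by (rule age_local) auto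
        then show ?thesis using t m_def by simp
      qed
      have "measure_pmf.expectation (Pi_pmf A 0 (\<lambda>_. p)) (\<lambda>s. real (age \<sigma> s i t)) =
            measure_pmf.expectation (pair_pmf p (Pi_pmf A' 0 (\<lambda>_. p)))
              (\<lambda>z. (if fst z = i \<and> \<sigma> i m then 0 else 1) * real (age \<sigma> (snd z) i m) + 1)"
        unfolding A using finA' A'_def
        by (subst Pi_pmf_insert) (auto simp: case_prod_unfold eq)
      also have "\<dots> = measure_pmf.expectation (pair_pmf p (Pi_pmf A' 0 (\<lambda>_. p)))
              (\<lambda>z. (if fst z = i \<and> \<sigma> i m then 0 else 1) * real (age \<sigma> (snd z) i m)) + 1"
        by (subst Bochner_Integration.integral_add)
           (auto intro!: integrable_measure_pmf_finite simp: fin fin_Pi finA')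
      also have "\<dots> = (if \<sigma> i m then 1 - pmf p i else 1) * ee (pmf p i) (\<sigma> i) m + 1"
        by (subst exp_pair_prod) (auto simp: fin fin_Pi finA' exp_ind IH)
      also have "\<dots> = ee (pmf p i) (\<sigma> i) t" using t m_def by simp
      finally show ?thesis .
    qed
  qed
qed



lemma ee_step: "1 \<le> t \<Longrightarrow> ee x b (Suc t) = 1 + (if b t then 1 - x else 1) * ee x b t"
  by (cases t) auto

lemma ee_ge1: "0 \<le> x \<Longrightarrow> x \<le> 1 \<Longrightarrow> 1 \<le> ee x b t"
  by (induction x b t rule: ee.induct) auto

lemma ee_mono: "0 \<le> x \<Longrightarrow> x \<le> y \<Longrightarrow> y \<le> 1 \<Longrightarrow> ee y b t \<le> ee x b t"
proof (induction y b t rule: ee.induct)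
  case (3 y b t)
  have "ee y b (Suc t) \<le> ee x b (Suc t)" using 3 by auto
  moreover have "0 \<le> ee y b (Suc t)" using ee_ge1[of y b "Suc t"] 3 by auto
  ultimately show ?case using 3
    by (auto intro!: mult_mono)
qed auto

lemma card_step: "card {t\<in>{1..Suc n}. P t} = card {t\<in>{1..n}. P t} + (if P (Suc n) then 1 else 0)"
proof -
  have "{t\<in>{1..Suc n}. P t} = (if P (Suc n) then insert (Suc n) {t\<in>{1..n}. P t} else {t\<in>{1..n}. P t})"
    by (auto simp: le_Suc_eq)
  then show ?thesis by auto
qed

lemma upper_aux:
  assumes x: "0 < x" "x \<le> 1"
  shows "(\<Sum>t=1..n. ee x b t - 1/x) + max (ee x b (Suc n) - 1/x) 0 / x
           \<le> real (card {t\<in>{1..n}. \<not> b t}) / x + real (card {t\<in>{1..n}. \<not> b t}) * (real (card {t\<in>{1..n}. \<not> b t}) - 1) / 2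
         \<and> ee x b (Suc n) - 1/x \<le> real (card {t\<in>{1..n}. \<not> b t})"
proof (induction n)
  case 0
  have "1 - 1/x \<le> 0" using x by (simp add: field_simps)
  then show ?case by (simp add: max_def)
next
  case (Suc n)
  define k where "k = real (card {t\<in>{1..n}. \<not> b t})"
  define d where "d = ee x b (Suc n) - 1/x"
  define S where "S = (\<Sum>t=1..n. ee x b t - 1/x)"
  have IH: "S + max d 0 / x \<le> k/x + k*(k-1)/2" "d \<le> k"
    using Suc unfolding k_def d_def S_def by auto
  have k0: "0 \<le> k" unfolding k_def by simp
  have sumS: "(\<Sum>t=1..Suc n. ee x b t - 1/x) = S + d"
    unfolding S_def d_def by simp
  show ?case
  proof (cases "b (Suc n)")
    case True
    have cd: "card {t\<in>{1..Suc n}. \<not> b t} = card {t\<in>{1..n}. \<not> b t}" using True card_step[where P="\<lambda>t. \<not> b t" and n=n] by simp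
    have e2: "ee x b (Suc (Suc n)) - 1/x = (1-x) * d"
      using True x unfolding d_def by (simp add: field_simps)
    have A: "d + max ((1-x)*d) 0 / x \<le> max d 0 / x"
    proof (cases "d \<ge> 0")
      case True
      then have "max ((1-x)*d) 0 = (1-x)*d" using x by simp
      then show ?thesis using x by (simp add: field_simps)
    next
      case False
      then have "(1-x)*d \<le> 0" using x by (simp add: mult_nonneg_nonpos)
      then show ?thesis using False x by (simp add: max_def)
    qed
    have B: "(1-x)*d \<le> k"
    proof (cases "d \<ge> 0")
      case True then have "(1-x)*d \<le> d" using x by (simp add: mult_left_le_one_le)
      then show ?thesis using IH by simp
    next
      case False then have "(1-x)*d \<le> 0" using x by (simp add: mult_nonneg_nonpos)
      then show ?thesis using k0 by simp
    qed
    show ?thesis unfolding sumS e2 cd k_def[symmetric] using A B IH by simp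
  next
    case False
    have cd: "real (card {t\<in>{1..Suc n}. \<not> b t}) = k + 1" using False card_step[where P="\<lambda>t. \<not> b t" and n=n] k_def by simp
    have e2: "ee x b (Suc (Suc n)) - 1/x = d + 1"
      using False x unfolding d_def by (simp add: field_simps)
    have A: "max (d + 1) 0 / x \<le> max d 0 / x + 1/x"
      using x by (simp add: max_def divide_right_mono field_simps)
    have "S + d + max (d + 1) 0 / x \<le> (k+1)/x + (k+1)*k/2"
    proof -
      have "S + d + max (d + 1) 0 / x \<le> (S + max d 0 / x) + d + 1/x" using A by simp
      also have "\<dots> \<le> k/x + k*(k-1)/2 + k + 1/x" using IH by simp
      also have "\<dots> = (k+1)/x + (k+1)*k/2"
      proof -
        have "(k+1)/x = k/x + 1/x" by (simp add: add_divide_distrib)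
        moreover have "(k+1)*k/2 = k*(k-1)/2 + k" by (simp add: field_simps)
        ultimately show ?thesis by linarith
      qed
      finally show ?thesis .
    qed
    then show ?thesis unfolding sumS e2 cd using IH by simp
  qed
qed

definition FF :: "real \<Rightarrow> (nat \<Rightarrow> bool) \<Rightarrow> nat \<Rightarrow> real" where
  "FF x b T = (\<Sum>t=1..T. ee x b t)"

lemma FF_upper:
  assumes x: "0 < x" "x \<le> 1"
  shows "FF x b T \<le> (real T + real (card {t\<in>{1..T}. \<not> b t})) / x
           + real (card {t\<in>{1..T}. \<not> b t}) * (real (card {t\<in>{1..T}. \<not> b t}) - 1) / 2"
proof -
  have "(\<Sum>t=1..T. ee x b t - 1/x) \<le> real (card {t\<in>{1..T}. \<not> b t}) / x
         + real (card {t\<in>{1..T}. \<not> b t}) * (real (card {t\<in>{1..T}. \<not> b t}) - 1) / 2"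
    using upper_aux[OF x, where n=T and b=b] x by (smt (verit) divide_nonneg_pos max.cobounded2)
  moreover have "(\<Sum>t=1..T. ee x b t - 1/x) = FF x b T - real T / x"
    unfolding FF_def by (simp add: sum_subtractf)
  ultimately show ?thesis by (simp add: add_divide_distrib)
qed

lemma geom_le: assumes "0 < (x::real)" "x \<le> 1" shows "(\<Sum>t=a..b. (1-x)^t) \<le> (1-x)^a / x"
proof (cases "b < a")
  case True
  have "0 \<le> (1-x)^a" using assms by simp
  then have "0 \<le> (1-x)^a / x" using assms by simp
  moreover have "{a..b} = {}" using True by auto
  ultimately show ?thesis by simp
next
  case False
  have ne: "1 - x \<noteq> 1" using assms by simp
  have "(\<Sum>t=a..b. (1-x)^t) = ((1-x)^a - (1-x)^Suc b) / (1 - (1-x))"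
    using False ne by (subst sum_gp) simp
  also have "\<dots> \<le> (1-x)^a / x" using assms by (simp add: divide_right_mono)
  finally show ?thesis .
qed

lemma geom_eq: assumes "0 < (x::real)" shows "(\<Sum>t=1..L. (1-x)^t) = ((1-x) - (1-x)^Suc L) / x"
proof (cases "L = 0")
  case True then show ?thesis by (simp add: algebra_simps)
next
  case False
  have ne: "1 - x \<noteq> 1" using assms by simp
  show ?thesis using False ne by (subst sum_gp) simp
qed

lemma mpow_le: assumes "0 < (x::real)" "x \<le> 1" shows "real m * (1-x)^m \<le> 1/x"
proof -
  have "real m * (1-x)^m = (\<Sum>t=1..m. (1-x)^m)" by simp
  also have "\<dots> \<le> (\<Sum>t=1..m. (1-x)^t)"
    using assms by (intro sum_mono power_decreasing) auto
  also have "\<dots> \<le> (1-x)^1/x" using geom_le assms by blast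
  also have "\<dots> \<le> 1/x" using assms by (simp add: divide_right_mono)
  finally show ?thesis .
qed

lemma ee_free: "0 < x \<Longrightarrow> 1 \<le> t \<Longrightarrow> (\<forall>u. 1 \<le> u \<and> u < t \<longrightarrow> b u) \<Longrightarrow> ee x b t = (1 - (1-x)^t)/x"
proof (induction t)
  case (Suc t)
  show ?case
  proof (cases "t = 0")
    case True then show ?thesis using Suc by simp
  next
    case False
    then have "ee x b (Suc t) = 1 + (1-x) * ee x b t" using Suc by (simp add: ee_step)
    also have "ee x b t = (1 - (1-x)^t)/x" using Suc False by auto
    finally show ?thesis using Suc by (simp add: field_simps)
  qed
qed simp

lemma FF_free_lower:
  assumes x: "0 < x" "x \<le> 1" and b: "\<forall>u. 1 \<le> u \<and> u < T \<longrightarrow> b u"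
  shows "FF x b T \<ge> real T / x - 1/x^2"
proof -
  have "FF x b T = (\<Sum>t=1..T. (1 - (1-x)^t)/x)"
    unfolding FF_def using x b by (intro sum.cong refl ee_free) auto
  also have "\<dots> = real T / x - (\<Sum>t=1..T. (1-x)^t) / x"
    by (simp add: diff_divide_distrib sum_subtractf sum_divide_distrib)
  finally have "FF x b T = real T / x - (\<Sum>t=1..T. (1-x)^t) / x" .
  moreover have "(\<Sum>t=1..T. (1-x)^t) \<le> 1/x"
    using geom_le[OF x, of 1 T] x by (smt (verit) divide_right_mono power_one_right)
  then have "(\<Sum>t=1..T. (1-x)^t) / x \<le> (1/x) / x" using x by (intro divide_right_mono) auto
  moreover have "(1/x)/x = 1/x^2" by (simp add: power2_eq_square)
  ultimately show ?thesis by simp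
qed



lemma blk_a:
  assumes "0 < x" "1 \<le> c" "1 \<le> t" "t \<le> c"
  shows "ee x (\<lambda>t. \<not> (c \<le> t \<and> t < c + B)) t = (1 - (1-x)^t)/x"
  using assms by (intro ee_free) auto

lemma blk_b:
  assumes x: "0 < x" and c: "1 \<le> c"
  shows "j \<le> B \<Longrightarrow> ee x (\<lambda>t. \<not> (c \<le> t \<and> t < c + B)) (c + j) = (1 - (1-x)^c)/x + real j"
proof (induction j)
  case 0 then show ?case using blk_a[OF x c, of c B] c by simp
next
  case (Suc j)
  have "ee x (\<lambda>t. \<not> (c \<le> t \<and> t < c + B)) (c + Suc j) = 1 + ee x (\<lambda>t. \<not> (c \<le> t \<and> t < c + B)) (c + j)"
    using Suc.prems c by (simp add: ee_step)
  then show ?case using Suc by simp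
qed

lemma blk_c:
  assumes x: "0 < x" and c: "1 \<le> c"
  shows "ee x (\<lambda>t. \<not> (c \<le> t \<and> t < c + B)) (c + B + j) = 1/x + (1-x)^j * (real B - (1-x)^c/x)"
proof (induction j)
  case 0 then show ?case using blk_b[OF x c, of B B] x by (simp add: field_simps)
next
  case (Suc j)
  have "ee x (\<lambda>t. \<not> (c \<le> t \<and> t < c + B)) (c + B + Suc j) = 1 + (1-x) * ee x (\<lambda>t. \<not> (c \<le> t \<and> t < c + B)) (c + B + j)"
    using c by (simp add: ee_step)
  also have "\<dots> = 1 + (1-x) * (1/x + (1-x)^j * (real B - (1-x)^c/x))" using Suc by simp
  also have "\<dots> = 1/x + (1-x)^Suc j * (real B - (1-x)^c/x)"
  proof -
    define Z where "Z = real B - (1-x)^c/x"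
    have "1 + (1-x) * (1/x + (1-x)^j * Z) = 1/x + (1-x)^Suc j * Z" using x by (simp add: field_simps)
    then show ?thesis unfolding Z_def .
  qed
  finally show ?case .
qed

lemma FF_block_lower:
  assumes x: "0 < x" "x \<le> 1" and c: "1 \<le> c" and T: "c + B \<le> T"
  shows "FF x (\<lambda>t. \<not> (c \<le> t \<and> t < c + B)) T \<ge>
     real T / x - 1/x^2 + real B * (real B + 1) / 2 - (real B + 1) * (1-x)^c / x - (1-x)^c / x^2
     + real B * (1-x) / x - real B * (1-x)^(T - c - B) / x"
proof -
  define b where "b = (\<lambda>t. \<not> (c \<le> t \<and> t < c + B))"
  define r where "r = 1 - x"
  define L where "L = T - c - B"
  have r0: "0 \<le> r" "r \<le> 1" "r < 1" using x unfolding r_def by auto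
  have TL: "T = (c - 1) + (B + 1) + L" using T c unfolding L_def by simp
  have split1: "FF x b T = (\<Sum>t=1..c-1. ee x b t) + (\<Sum>t=c..c+B. ee x b t) + (\<Sum>t=c+B+1..T. ee x b t)"
  proof -
    have "FF x b T = (\<Sum>t=1..(c+B) + L. ee x b t)" unfolding FF_def L_def using T by simp
    also have "\<dots> = (\<Sum>t=1..c+B. ee x b t) + (\<Sum>t=c+B+1..(c+B)+L. ee x b t)"
      by (rule sum.ub_add_nat) simp
    also have "(\<Sum>t=1..c+B. ee x b t) = (\<Sum>t=1..(c-1)+(B+1). ee x b t)" using c by simp
    also have "\<dots> = (\<Sum>t=1..c-1. ee x b t) + (\<Sum>t=c-1+1..(c-1)+(B+1). ee x b t)"
      by (rule sum.ub_add_nat) simp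
    also have "(c+B)+L = T" using T unfolding L_def by simp
    also have "c-1+1 = c" using c by simp
    also have "(c-1)+(B+1) = c + B" using c by simp
    finally show ?thesis .
  qed
  have S1: "(\<Sum>t=1..c-1. ee x b t) \<ge> real (c-1)/x - 1/x^2"
  proof -
    have "(\<Sum>t=1..c-1. ee x b t) = (\<Sum>t=1..c-1. (1 - r^t)/x)"
      unfolding b_def r_def using x c by (intro sum.cong refl blk_a) auto
    also have "\<dots> = real (c-1)/x - (\<Sum>t=1..c-1. r^t)/x"
      by (simp add: diff_divide_distrib sum_subtractf sum_divide_distrib)
    finally have e: "(\<Sum>t=1..c-1. ee x b t) = real (c-1)/x - (\<Sum>t=1..c-1. r^t)/x" .
    have "(\<Sum>t=1..c-1. r^t) \<le> 1/x"
      using geom_le[OF x, of 1 "c-1"] x r0 unfolding r_def by (smt (verit) divide_right_mono power_one_right)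
    then have "(\<Sum>t=1..c-1. r^t)/x \<le> (1/x)/x" using x by (intro divide_right_mono) auto
    moreover have "(1/x)/x = 1/x^2" by (simp add: power2_eq_square)
    ultimately show ?thesis using e by simp
  qed
  have S2: "(\<Sum>t=c..c+B. ee x b t) = (real B + 1) * ((1 - r^c)/x) + real B * (real B + 1) / 2"
  proof -
    have "(\<Sum>t=c..c+B. ee x b t) = (\<Sum>t=0+c..B+c. ee x b t)" by (simp add: add.commute)
    also have "\<dots> = (\<Sum>j=0..B. ee x b (j + c))" by (rule sum.shift_bounds_cl_nat_ivl)
    also have "\<dots> = (\<Sum>j=0..B. (1 - r^c)/x + real j)"
      unfolding b_def r_def using blk_b[OF x(1) c] by (intro sum.cong refl) (auto simp: add.commute)
    also have "\<dots> = (real B + 1) * ((1 - r^c)/x) + (\<Sum>j=0..B. real j)"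
      by (simp add: sum.distrib)
    also have "(\<Sum>j=0..B. real j) = real B * (real B + 1) / 2"
      using double_gauss_sum[of B, where 'a=real] by simp
    finally show ?thesis .
  qed
  define Y where "Y = real B - r^c/x"
  define G where "G = (\<Sum>j=1..L. r^j)"
  have S3: "(\<Sum>t=c+B+1..T. ee x b t) = real L / x + Y * G"
  proof -
    have "(\<Sum>t=c+B+1..T. ee x b t) = (\<Sum>t=1+(c+B)..L+(c+B). ee x b t)" using T unfolding L_def by (simp add: add.commute)
    also have "\<dots> = (\<Sum>j=1..L. ee x b (j + (c+B)))" by (rule sum.shift_bounds_cl_nat_ivl)
    also have "\<dots> = (\<Sum>j=1..L. 1/x + r^j * Y)"
      unfolding b_def r_def Y_def using blk_c[OF x(1) c] by (intro sum.cong refl) (auto simp: add.commute)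
    also have "\<dots> = real L / x + Y * G"
      unfolding G_def by (simp add: sum.distrib sum_distrib_left mult.commute)
    finally show ?thesis .
  qed
  have Geq: "G = (r - r^Suc L)/x" unfolding G_def r_def using geom_eq[OF x(1)] by simp
  have G0: "0 \<le> G" unfolding G_def using r0 by (auto intro: sum_nonneg)
  have Gle: "G \<le> 1/x"
    using geom_le[OF x, of 1 L] x r0 unfolding G_def r_def by (smt (verit) divide_right_mono power_one_right)
  have BG: "real B * G \<ge> real B * r / x - real B * r^L / x"
  proof -
    have "r^Suc L \<le> r^L" using r0 by (simp add: mult_left_le_one_le)
    then have "G \<ge> (r - r^L)/x" unfolding Geq using x by (intro divide_right_mono) auto
    then have "real B * G \<ge> real B * ((r - r^L)/x)" by (intro mult_left_mono) auto
    then show ?thesis by (simp add: diff_divide_distrib right_diff_distrib)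
  qed
  have rcG: "r^c / x * G \<le> r^c / x^2"
  proof -
    have "0 \<le> r^c / x" using r0 x by simp
    then have "r^c / x * G \<le> r^c/x * (1/x)" using Gle by (intro mult_left_mono) auto
    then show ?thesis by (simp add: power2_eq_square)
  qed
  have YG: "Y * G = real B * G - r^c / x * G" unfolding Y_def by (simp add: algebra_simps)
  have main: "FF x b T = real (c-1)/x + (\<Sum>t=1..c-1. ee x b t) - real (c-1)/x + (real B + 1) * ((1 - r^c)/x) + real B * (real B + 1) / 2 + real L / x + Y * G"
    using split1 S2 S3 by simp
  have tx: "real T / x = real (c-1)/x + (real B + 1)/x + real L / x"
    using TL by (simp add: add_divide_distrib)
  have e2: "(real B + 1) * ((1 - r^c)/x) = (real B + 1)/x - (real B + 1) * r^c / x"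
    by (simp add: right_diff_distrib diff_divide_distrib)
  show ?thesis
    using main tx e2 S1 BG rcG YG unfolding b_def[symmetric] r_def[symmetric] L_def[symmetric]
    by linarith
qed



lemma payoff_eq:
  assumes "user_pmf N p" "N > 0" "T > 0"
  shows "payoff N T p \<sigma> = (\<Sum>i<N. FF (pmf p i) (\<sigma> i) T) / (real T * real N)"
proof -
  have fin: "finite (set_pmf p)" using assms(1) unfolding user_pmf_def by (rule finite_subset) simp
  have e: "measure_pmf.expectation (sched_pmf T p) (\<lambda>s. real (age \<sigma> s i t)) = ee (pmf p i) (\<sigma> i) t"
    if "t \<in> {1..T}" for i t
    unfolding sched_pmf_def using that by (intro exp_age[OF fin]) auto
  have "payoff N T p \<sigma> = (1 / real T) * (\<Sum>t = 1..T. (1 / real N) * (\<Sum>i<N. ee (pmf p i) (\<sigma> i) t))"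
    unfolding payoff_def by (intro arg_cong2[where f="(*)"] refl sum.cong) (auto simp: e)
  also have "\<dots> = (\<Sum>t = 1..T. \<Sum>i<N. ee (pmf p i) (\<sigma> i) t) / (real T * real N)"
    by (simp add: sum_divide_distrib[symmetric] divide_divide_eq_left mult.commute)
  also have "(\<Sum>t = 1..T. \<Sum>i<N. ee (pmf p i) (\<sigma> i) t) = (\<Sum>i<N. FF (pmf p i) (\<sigma> i) T)"
    unfolding FF_def by (rule sum.swap)
  finally show ?thesis .
qed

lemma mk_pmf:
  assumes "\<forall>i<N. 0 \<le> w i" "(\<Sum>i<N. w i) = (1::real)"
  shows "\<exists>p. user_pmf N p \<and> (\<forall>i<N. pmf p i = w i)"
proof -
  define f where "f = (\<lambda>i. if i < N then w i else 0)"
  have nn: "\<And>i. 0 \<le> f i" unfolding f_def using assms by auto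
  have "(\<integral>\<^sup>+x. ennreal (f x) \<partial>count_space UNIV) = (\<Sum>x\<in>{..<N}. ennreal (f x))"
    by (rule nn_integral_count_space') (auto simp: f_def)
  also have "\<dots> = ennreal (\<Sum>x\<in>{..<N}. f x)" using nn by (intro sum_ennreal) auto
  also have "(\<Sum>x\<in>{..<N}. f x) = 1" using assms unfolding f_def by simp
  finally have pr: "(\<integral>\<^sup>+x. ennreal (f x) \<partial>count_space UNIV) = 1" by simp
  have "user_pmf N (embed_pmf f)" unfolding user_pmf_def
    using set_embed_pmf[OF nn pr] by (auto simp: f_def split: if_splits)
  moreover have "\<forall>i<N. pmf (embed_pmf f) i = w i"
    using pmf_embed_pmf[OF nn pr] by (simp add: f_def)
  ultimately show ?thesis by blast
qed

lemma harm:
  assumes "\<forall>i<N. 0 < x i" "(\<Sum>i<N. x i) = (1::real)"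
  shows "(\<Sum>i<N. 1 / x i) \<ge> real N ^ 2"
proof -
  have "1 / x i + real N ^ 2 * x i \<ge> 2 * real N" if "i < N" for i
  proof -
    have xi: "0 < x i" using assms that by auto
    have "0 \<le> (1 - real N * x i)^2" by simp
    then have "2 * real N * x i \<le> 1 + (real N * x i)^2" by (simp add: power2_eq_square algebra_simps)
    then have "2 * real N * x i / x i \<le> (1 + (real N * x i)^2) / x i" using xi by (intro divide_right_mono) auto
    then show ?thesis using xi by (simp add: power2_eq_square field_simps)
  qed
  then have "(\<Sum>i<N. 1 / x i + real N ^ 2 * x i) \<ge> (\<Sum>i<N. 2 * real N)" by (intro sum_mono) auto
  then have "(\<Sum>i<N. 1 / x i) + real N ^ 2 * (\<Sum>i<N. x i) \<ge> 2 * real N * real N"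
    by (simp add: sum.distrib sum_distrib_left)
  then show ?thesis using assms(2) by (simp add: power2_eq_square)
qed

lemma user_pmf_sum: "user_pmf N p \<Longrightarrow> (\<Sum>i<N. pmf p i) = 1"
  unfolding user_pmf_def by (intro sum_pmf_eq_1) auto

lemma blocks_sum:
  fixes \<sigma> :: "nat \<Rightarrow> nat \<Rightarrow> bool" and T :: nat
  shows "card {(i, t). i < (N::nat) \<and> t \<in> {1..T} \<and> \<not> \<sigma> i t} = (\<Sum>i<N. card {t\<in>{1..T}. \<not> \<sigma> i t})"
proof -
  have "{(i, t). i < N \<and> t \<in> {1..T} \<and> \<not> \<sigma> i t} = Sigma {..<N} (\<lambda>i. {t\<in>{1..T}. \<not> \<sigma> i t})" by auto
  moreover have "card (Sigma {..<N} (\<lambda>i. {t\<in>{1..T}. \<not> \<sigma> i t})) = (\<Sum>i<N. card {t\<in>{1..T}. \<not> \<sigma> i t})"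
  proof (rule card_SigmaI)
    show "finite {..<N}" by simp
    show "\<forall>a\<in>{..<N}. finite {t\<in>{1..T}. \<not> \<sigma> a t}" by auto
  qed
  ultimately show ?thesis by simp
qed

lemma FF_nonneg: "0 \<le> x \<Longrightarrow> x \<le> 1 \<Longrightarrow> 0 \<le> FF x b T"
  unfolding FF_def using ee_ge1 by (intro sum_nonneg) (smt (verit))



lemma upper_bound:
  fixes \<sigma> :: "nat \<Rightarrow> nat \<Rightarrow> bool"
  assumes N: "N \<ge> 2" and \<alpha>: "0 < \<alpha>" "\<alpha> < 1" and T: "T \<ge> 1" and fe: "feasible N T \<alpha> \<sigma>"
    and B: "real B = \<alpha> * real T" "B \<ge> 2"
  shows "\<exists>p'. user_pmf N p' \<and> (\<Sum>i<N. FF (pmf p' i) (\<sigma> i) T) \<le>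
     max ((sqrt (1+\<alpha>) + real N - 1)^2 * real T + real B * (real B - 1) / 2)
         (real N ^ 2 * real T + real N * real B + real B * (real B - 2) / 2)"
proof -
  define k where "k i = card {t\<in>{1..T}. \<not> \<sigma> i t}" for i
  have ksum: "(\<Sum>i<N. k i) \<le> B"
  proof -
    have "real (\<Sum>i<N. k i) \<le> \<alpha> * real T"
      using fe blocks_sum[of N T \<sigma>] unfolding feasible_def k_def by simp
    then show ?thesis using B by linarith
  qed
  show ?thesis
  proof (cases "\<exists>j<N. k j \<ge> B")
    case True
    then obtain j where j: "j < N" "k j \<ge> B" by blast
    have sumsplit: "(\<Sum>i<N. k i) = k j + (\<Sum>i\<in>{..<N}-{j}. k i)"
      using j by (simp add: sum.remove)
    have kother: "k i = 0" if "i < N" "i \<noteq> j" for i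
    proof -
      have "k i \<le> (\<Sum>i\<in>{..<N}-{j}. k i)" using that by (intro member_le_sum) auto
      then show ?thesis using sumsplit ksum j by linarith
    qed
    have kj: "k j = B" using sumsplit ksum j by linarith
    define s where "s = sqrt (1+\<alpha>)"
    have s1: "s \<ge> 1" unfolding s_def using \<alpha> by simp
    have s2: "s^2 = 1 + \<alpha>" unfolding s_def using \<alpha> by simp
    define D where "D = s + real N - 1"
    have D0: "D > 0" unfolding D_def using s1 N by simp
    define w where "w i = (if i = j then s / D else 1 / D)" for i
    have cardo: "card ({..<N}-{j}) = N - 1" using j by simp
    have wsum: "(\<Sum>i<N. w i) = 1"
    proof -
      have "(\<Sum>i<N. w i) = w j + (\<Sum>i\<in>{..<N}-{j}. w i)" using j by (simp add: sum.remove)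
      also have "(\<Sum>i\<in>{..<N}-{j}. w i) = (\<Sum>i\<in>{..<N}-{j}. 1/D)" by (intro sum.cong) (auto simp: w_def)
      also have "\<dots> = real (N - 1) / D" using cardo by simp
      also have "w j + \<dots> = (s + real (N-1)) / D" by (simp add: w_def add_divide_distrib)
      also have "\<dots> = 1" using D0 N unfolding D_def by (simp add: of_nat_diff)
      finally show ?thesis .
    qed
    have wpos: "\<forall>i<N. 0 < w i" unfolding w_def using D0 s1 by auto
    obtain p' where p': "user_pmf N p'" "\<forall>i<N. pmf p' i = w i"
      using mk_pmf[of N w] wpos wsum by (auto intro: less_imp_le)
    have bnd: "FF (pmf p' i) (\<sigma> i) T \<le> (real T + real (k i)) / w i + real (k i) * (real (k i) - 1) / 2"
      if "i < N" for i
      using FF_upper[of "pmf p' i" "\<sigma> i" T] p' wpos that pmf_le_1[of p' i] unfolding k_def by auto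
    have "(\<Sum>i<N. FF (pmf p' i) (\<sigma> i) T) \<le> (\<Sum>i<N. (real T + real (k i)) / w i + real (k i) * (real (k i) - 1) / 2)"
      using bnd by (intro sum_mono) auto
    also have "\<dots> = ((real T + real B) / (s/D) + real B * (real B - 1) / 2) +
        (\<Sum>i\<in>{..<N}-{j}. (real T + real (k i)) / w i + real (k i) * (real (k i) - 1) / 2)"
      using j by (simp add: sum.remove kj w_def)
    also have "(\<Sum>i\<in>{..<N}-{j}. (real T + real (k i)) / w i + real (k i) * (real (k i) - 1) / 2)
        = (\<Sum>i\<in>{..<N}-{j}. real T * D)"
      using kother by (intro sum.cong) (auto simp: w_def)
    also have "\<dots> = real (N-1) * real T * D" using cardo by simp
    also have "(real T + real B) / (s/D) = real T * s * D"
    proof -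
      have "real T + real B = real T * s^2" using B s2 by (simp add: algebra_simps)
      then show ?thesis using s1 D0 by (simp add: power2_eq_square field_simps)
    qed
    also have "real T * s * D + real B * (real B - 1) / 2 + real (N - 1) * real T * D
        = D^2 * real T + real B * (real B - 1) / 2"
      using N unfolding D_def by (simp add: of_nat_diff power2_eq_square algebra_simps)
    finally have "(\<Sum>i<N. FF (pmf p' i) (\<sigma> i) T) \<le> D^2 * real T + real B * (real B - 1) / 2" .
    then show ?thesis using p' unfolding D_def s_def by (intro exI[of _ p']) auto
  next
    case False
    then have kl: "k i + 1 \<le> B" if "i < N" for i using that by force
    define p' where "p' = pmf_of_set {..<N}"
    have ne: "{..<N} \<noteq> {}" using N lessThan_empty_iff[of N] by simp
    have up: "user_pmf N p'" unfolding p'_def user_pmf_def using ne by simp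
    have pv: "pmf p' i = 1 / real N" if "i < N" for i unfolding p'_def using that ne by (subst pmf_of_set) auto
    define c where "c = (real B - 2) / 2"
    have bnd: "FF (pmf p' i) (\<sigma> i) T \<le> real N * real T + (real N + c) * real (k i)"
      if "i < N" for i
    proof -
      have f1: "FF (pmf p' i) (\<sigma> i) T \<le> (real T + real (k i)) / (1 / real N) + real (k i) * (real (k i) - 1) / 2"
        using FF_upper[of "pmf p' i" "\<sigma> i" T] pv[OF that] N unfolding k_def by auto
      have f2: "real (k i) * (real (k i) - 1) \<le> real (k i) * (real B - 2)"
        using kl[OF that] by (intro mult_left_mono) auto
      have f3: "(real T + real (k i)) / (1 / real N) = real N * real T + real N * real (k i)"
        by (simp add: algebra_simps)
      have f4: "real (k i) * (real (k i) - 1) / 2 \<le> c * real (k i)"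
        using f2 unfolding c_def by (simp add: field_simps)
      have f5: "FF (pmf p' i) (\<sigma> i) T \<le> real N * real T + real N * real (k i) + real (k i) * (real (k i) - 1) / 2"
        using f1 unfolding f3 .
      have f6: "(real N + c) * real (k i) = real N * real (k i) + c * real (k i)" by (simp add: distrib_right)
      show ?thesis using f5 f4 f6 by linarith
    qed
    have "(\<Sum>i<N. FF (pmf p' i) (\<sigma> i) T) \<le> (\<Sum>i<N. real N * real T + (real N + c) * real (k i))"
      using bnd by (intro sum_mono) auto
    also have "\<dots> = real N * real N * real T + (real N + c) * real (\<Sum>i<N. k i)"
      by (simp add: sum.distrib sum_distrib_left[symmetric])
    also have "\<dots> \<le> real N * real N * real T + (real N + c) * real B"
    proof -
      have "real (\<Sum>i<N. k i) \<le> real B" using ksum by linarith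
      moreover have "0 \<le> real N + c" unfolding c_def using B(2) by simp
      ultimately show ?thesis by (intro add_left_mono mult_left_mono)
    qed
    finally have "(\<Sum>i<N. FF (pmf p' i) (\<sigma> i) T) \<le> real N ^ 2 * real T + real N * real B + real B * (real B - 2) / 2"
      unfolding c_def by (simp add: power2_eq_square algebra_simps)
    then show ?thesis using up by (intro exI[of _ p']) auto
  qed
qed



lemma lower_bound:
  assumes N: "N \<ge> 2" and \<alpha>: "0 < \<alpha>" "\<alpha> < 1" and B: "real B = \<alpha> * real T"
    and p: "user_pmf N p" and c: "c = (T - B) div 2" "1 \<le> c"
    and Kc: "real B + 1 \<le> Kc * real c"
    and \<kappa>: "\<kappa> = (1 - \<alpha>) / (real N ^ 2 + real N + 1)"
  shows "\<exists>\<sigma>'. feasible N T \<alpha> \<sigma>' \<and>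
     (\<Sum>i<N. FF (pmf p i) (\<sigma>' i) T) \<ge> real N ^ 2 * real T + real N * real B + real B * (real B - 1) / 2
        - (real N + 3 + 2 * Kc) / \<kappa>^2"
proof -
  have BT: "B \<le> T" using B \<alpha> by (smt (verit) mult_left_le_one_le of_nat_0_le_iff of_nat_le_iff)
  have cBT: "c + B \<le> T" using c BT by linarith
  define L where "L = T - c - B"
  have Lc: "c \<le> L" using c BT unfolding L_def by linarith
  have Kc0: "0 < Kc" using Kc c by (smt (verit) mult_nonpos_nonneg of_nat_0_le_iff)
  define D where "D = real N ^ 2 + real N + 1"
  have den: "1 \<le> D" unfolding D_def by simp
  have kD: "\<kappa> = (1 - \<alpha>) / D" unfolding \<kappa> D_def ..
  have k0: "0 < \<kappa>" "\<kappa> < 1"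
  proof -
    show "0 < \<kappa>" unfolding kD using \<alpha> den by simp
    have "(1 - \<alpha>) / D \<le> (1 - \<alpha>) / 1" using \<alpha> den by (intro divide_left_mono) auto
    then show "\<kappa> < 1" unfolding kD using \<alpha> by simp
  qed
  define x where "x i = pmf p i" for i
  have xsum: "(\<Sum>i<N. x i) = 1" unfolding x_def using user_pmf_sum[OF p] .
  have x1: "x i \<le> 1" for i unfolding x_def by (rule pmf_le_1)
  have x0: "0 \<le> x i" for i unfolding x_def by simp
  obtain j where j: "j < N" "\<forall>i<N. x j \<le> x i"
  proof -
    define m where "m = Min (x ` {..<N})"
    have ne: "{..<N} \<noteq> {}" using N lessThan_empty_iff[of N] by simp
    have "m \<in> x ` {..<N}" unfolding m_def using ne by (intro Min_in) auto
    then obtain j where "j < N" "x j = m" by auto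
    moreover have "\<forall>i<N. m \<le> x i" unfolding m_def by (auto intro: Min_le)
    ultimately show ?thesis using that by auto
  qed
  have xjN: "real N * x j \<le> 1"
  proof -
    have "(\<Sum>i<N. x j) \<le> (\<Sum>i<N. x i)" using j by (intro sum_mono) auto
    then show ?thesis using xsum by simp
  qed
  define \<sigma>' where "\<sigma>' i t = (\<not> (i = j \<and> c \<le> t \<and> t < c + B))" for i t
  have blk: "{(i, t). i < N \<and> t \<in> {1..T} \<and> \<not> \<sigma>' i t} = {j} \<times> {c..<c+B}"
    using j c cBT unfolding \<sigma>'_def by auto
  have fe: "feasible N T \<alpha> \<sigma>'"
    unfolding feasible_def using blk B by (auto simp: \<sigma>'_def)
  have sj: "\<sigma>' j = (\<lambda>t. \<not> (c \<le> t \<and> t < c + B))" unfolding \<sigma>'_def by auto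
  have so: "\<sigma>' i = (\<lambda>t. True)" if "i \<noteq> j" for i unfolding \<sigma>'_def using that by auto
  have split: "(\<Sum>i<N. FF (x i) (\<sigma>' i) T) = FF (x j) (\<lambda>t. \<not> (c \<le> t \<and> t < c + B)) T
       + (\<Sum>i\<in>{..<N}-{j}. FF (x i) (\<lambda>t. True) T)"
    using j by (simp add: sum.remove sj so)
  have goal: "(\<Sum>i<N. FF (x i) (\<sigma>' i) T) \<ge> real N ^ 2 * real T + real N * real B + real B * (real B - 1) / 2
        - (real N + 3 + 2 * Kc) / \<kappa>^2"
  proof (cases "\<kappa> \<le> x j")
    case True
    have xk: "\<kappa> \<le> x i" if "i < N" for i using True j that by force
    have xp: "0 < x i" if "i < N" for i using xk[OF that] k0 by simp
    have inv: "1 / x i ^ 2 \<le> 1 / \<kappa>^2" if "i < N" for i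
      using xk[OF that] k0 by (intro divide_left_mono power_mono mult_pos_pos) auto
    define y where "y = x j"
    define r where "r = 1 - y"
    have y: "0 < y" "y \<le> 1" "\<kappa> \<le> y" unfolding y_def using xp j x1 True by auto
    have r0: "0 \<le> r" "r \<le> 1" unfolding r_def using y by auto
    have Fj: "FF y (\<lambda>t. \<not> (c \<le> t \<and> t < c + B)) T \<ge>
       real T / y - 1/y^2 + real B * (real B + 1) / 2 - (real B + 1) * r^c / y - r^c / y^2
       + real B * r / y - real B * r^L / y"
      using FF_block_lower[OF y(1,2) c(2) cBT] unfolding r_def L_def by simp
    have iy: "1/y^2 \<le> 1/\<kappa>^2" using inv j unfolding y_def by simp
    have e1: "(real B + 1) * r^c / y \<le> Kc / \<kappa>^2"
    proof -
      have "real c * r^c \<le> 1/y" using mpow_le[OF y(1,2)] unfolding r_def .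
      have "(real B + 1) * r^c \<le> Kc * real c * r^c" using Kc r0 by (intro mult_right_mono) auto
      also have "\<dots> = Kc * (real c * r^c)" by (simp add: mult.assoc)
      also have "\<dots> \<le> Kc * (1/y)" using \<open>real c * r^c \<le> 1/y\<close> Kc0 by (intro mult_left_mono) auto
      finally have "(real B + 1) * r^c / y \<le> Kc * (1/y) / y" using y by (intro divide_right_mono) auto
      also have "\<dots> = Kc * (1/y^2)" by (simp add: power2_eq_square)
      also have "\<dots> \<le> Kc * (1/\<kappa>^2)" using iy Kc0 by (intro mult_left_mono) auto
      finally show ?thesis by simp
    qed
    have e2: "real B * r^L / y \<le> Kc / \<kappa>^2"
    proof -
      have "real L * r^L \<le> 1/y" using mpow_le[OF y(1,2)] unfolding r_def .
      have "real B \<le> Kc * real L" using Kc Lc Kc0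
        by (smt (verit) mult_left_mono of_nat_le_iff)
      then have "real B * r^L \<le> Kc * real L * r^L" using r0 by (intro mult_right_mono) auto
      also have "\<dots> = Kc * (real L * r^L)" by (simp add: mult.assoc)
      also have "\<dots> \<le> Kc * (1/y)" using \<open>real L * r^L \<le> 1/y\<close> Kc0 by (intro mult_left_mono) auto
      finally have "real B * r^L / y \<le> Kc * (1/y) / y" using y by (intro divide_right_mono) auto
      also have "\<dots> = Kc * (1/y^2)" by (simp add: power2_eq_square)
      also have "\<dots> \<le> Kc * (1/\<kappa>^2)" using iy Kc0 by (intro mult_left_mono) auto
      finally show ?thesis by simp
    qed
    have e3: "r^c / y^2 \<le> 1/\<kappa>^2"
    proof -
      have "r^c \<le> 1" using r0 by (simp add: power_le_one)
      then have "r^c / y^2 \<le> 1 / y^2" using y by (intro divide_right_mono) auto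
      then show ?thesis using iy by simp
    qed
    have e4: "real B * r / y \<ge> (real N - 1) * real B"
    proof -
      have "r / y \<ge> real N - 1" using xjN y unfolding r_def y_def by (simp add: field_simps)
      then have "real B * (real N - 1) \<le> real B * (r / y)" by (intro mult_left_mono) auto
      then show ?thesis by (simp add: mult.commute)
    qed
    have FFj: "FF y (\<lambda>t. \<not> (c \<le> t \<and> t < c + B)) T \<ge>
        real T / y + real B * (real B + 1) / 2 + (real N - 1) * real B - (2 + 2 * Kc) / \<kappa>^2"
      using Fj iy e1 e2 e3 e4 by (simp add: add_divide_distrib)
    have Fo: "FF (x i) (\<lambda>t. True) T \<ge> real T / x i - 1/\<kappa>^2" if "i \<in> {..<N}-{j}" for i
      using FF_free_lower[of "x i" T "\<lambda>t. True"] xp x1 inv that by force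
    have so_sum: "(\<Sum>i\<in>{..<N}-{j}. FF (x i) (\<lambda>t. True) T) \<ge> (\<Sum>i\<in>{..<N}-{j}. real T / x i - 1/\<kappa>^2)"
      using Fo by (intro sum_mono) auto
    have m1: "(\<Sum>i\<in>{..<N}-{j}. real T / x i - 1/\<kappa>^2) = (\<Sum>i\<in>{..<N}-{j}. real T / x i) - (real N - 1) / \<kappa>^2"
      using j N by (simp add: sum_subtractf of_nat_diff)
    have m2: "(\<Sum>i<N. real T / x i) = real T / x j + (\<Sum>i\<in>{..<N}-{j}. real T / x i)"
      using j by (simp add: sum.remove)
    have m3: "(\<Sum>i<N. real T / x i) \<ge> real N ^ 2 * real T"
    proof -
      have "(\<Sum>i<N. real T / x i) = real T * (\<Sum>i<N. 1 / x i)" by (simp add: sum_distrib_left)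
      moreover have "(\<Sum>i<N. 1 / x i) \<ge> real N ^ 2" using harm[of N x] xp xsum by auto
      ultimately show ?thesis by (simp add: mult.commute mult_left_mono)
    qed
    have m4: "(real N + 3 + 2 * Kc) / \<kappa>^2 = (2 + 2 * Kc) / \<kappa>^2 + (real N - 1) / \<kappa>^2 + 2 / \<kappa>^2"
      by (simp add: add_divide_distrib[symmetric] diff_divide_distrib[symmetric])
    have m5: "0 \<le> 2 / \<kappa>^2" by simp
    have m6: "real B * (real B + 1) / 2 + (real N - 1) * real B = real N * real B + real B * (real B - 1) / 2"
      by (simp add: field_simps)
    have m7: "(\<Sum>i<N. FF (x i) (\<sigma>' i) T) = FF (x j) (\<lambda>t. \<not> (c \<le> t \<and> t < c + B)) T
       + (\<Sum>i\<in>{..<N}-{j}. FF (x i) (\<lambda>t. True) T)" using split .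
    from m1 m2 m3 m4 m5 m6 m7 FFj so_sum show ?thesis unfolding y_def by linarith
  next
    case False
    define r where "r = 1 - \<kappa>"
    have r0: "0 \<le> r" "r \<le> 1" unfolding r_def using k0 by auto
    have mono: "FF (x j) (\<lambda>t. \<not> (c \<le> t \<and> t < c + B)) T \<ge> FF \<kappa> (\<lambda>t. \<not> (c \<le> t \<and> t < c + B)) T"
      unfolding FF_def using False k0 x0 by (intro sum_mono ee_mono) auto
    have Fk: "FF \<kappa> (\<lambda>t. \<not> (c \<le> t \<and> t < c + B)) T \<ge>
       real T / \<kappa> - 1/\<kappa>^2 + real B * (real B + 1) / 2 - (real B + 1) * r^c / \<kappa> - r^c / \<kappa>^2
       + real B * r / \<kappa> - real B * r^L / \<kappa>"
      using FF_block_lower[of \<kappa> c B T] k0 c cBT unfolding r_def L_def by simp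
    have a1: "(real B + 1) * r^c / \<kappa> \<le> (real B + 1) / \<kappa>"
      using r0 k0 by (intro divide_right_mono mult_left_le) (auto simp: power_le_one)
    have a2: "r^c / \<kappa>^2 \<le> 1 / \<kappa>^2"
      using r0 k0 by (intro divide_right_mono) (auto simp: power_le_one)
    have a3: "real B * r^L / \<kappa> \<le> real B * r / \<kappa>"
    proof -
      have "r^L \<le> r^1" using r0 Lc c by (intro power_decreasing) auto
      then show ?thesis using k0 by (intro divide_right_mono mult_left_mono) auto
    qed
    have a4: "(real T - real B) / \<kappa> = (real N ^ 2 + real N + 1) * real T"
    proof -
      have "real T - real B = (1 - \<alpha>) * real T" using B by (simp add: algebra_simps)
      then show ?thesis using \<kappa> \<alpha> by (simp add: field_simps)
    qed
    have a5: "1 / \<kappa> \<le> 1 / \<kappa>^2"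
      using k0 by (intro divide_left_mono) (auto simp: power2_eq_square mult_left_le_one_le)
    have a6: "real T / \<kappa> - (real B + 1) / \<kappa> = (real T - real B) / \<kappa> - 1 / \<kappa>"
      by (simp add: diff_divide_distrib add_divide_distrib)
    have a7: "real N * real B \<le> real N * real T" using BT by (simp add: mult_left_mono)
    have a8: "real B \<le> real T" using BT by simp
    have Fj: "FF (x j) (\<lambda>t. \<not> (c \<le> t \<and> t < c + B)) T \<ge> real N ^ 2 * real T + real N * real B + real B * (real B - 1) / 2
        - 3 / \<kappa>^2"
    proof -
      have "FF (x j) (\<lambda>t. \<not> (c \<le> t \<and> t < c + B)) T \<ge> (real N ^ 2 + real N + 1) * real T - 1/\<kappa> - 2/\<kappa>^2 + real B * (real B + 1) / 2"
        using mono Fk a1 a2 a3 a4 a6 by linarith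
      moreover have "real B * (real B + 1) / 2 = real B * (real B - 1) / 2 + real B" by (simp add: field_simps)
      moreover have "(real N ^ 2 + real N + 1) * real T = real N ^ 2 * real T + real N * real T + real T"
        by (simp add: algebra_simps)
      moreover have "3 / \<kappa>^2 = 1 / \<kappa>^2 + 2 / \<kappa>^2" by (simp add: add_divide_distrib[symmetric])
      ultimately show ?thesis using a5 a7 a8 by linarith
    qed
    have "(\<Sum>i\<in>{..<N}-{j}. FF (x i) (\<lambda>t. True) T) \<ge> 0"
      using x0 x1 by (intro sum_nonneg FF_nonneg) auto
    moreover have "3 / \<kappa>^2 \<le> (real N + 3 + 2 * Kc) / \<kappa>^2"
      using Kc0 by (intro divide_right_mono) auto
    ultimately show ?thesis using split Fj by linarith
  qed
  show ?thesis using fe goal unfolding x_def by blast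
qed



theorem theorem6:
  fixes N :: nat and \<alpha> :: real
  assumes "N \<ge> 2" and "0 < \<alpha>" and "\<alpha> < 1"
  shows "\<exists>T0. \<forall>T \<ge> T0. \<alpha> * real T \<in> \<int> \<longrightarrow>
           \<not> (\<exists>p \<sigma>. user_pmf N p \<and> feasible N T \<alpha> \<sigma> \<and>
                 (\<forall>p'. user_pmf N p' \<longrightarrow> payoff N T p \<sigma> \<le> payoff N T p' \<sigma>) \<and>
                 (\<forall>\<sigma>'. feasible N T \<alpha> \<sigma>' \<longrightarrow> payoff N T p \<sigma>' \<le> payoff N T p \<sigma>))"
proof -
  note N = assms(1) and \<alpha> = assms(2,3)
  define s where "s = sqrt (1 + \<alpha>)"
  define \<kappa> where "\<kappa> = (1 - \<alpha>) / (real N ^ 2 + real N + 1)"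
  define Kc where "Kc = 4 / (1 - \<alpha>)"
  define E where "E = (real N + 3 + 2 * Kc) / \<kappa>^2"
  define g1 where "g1 = (real N - 1) * (s - 1)^2"
  have s1: "s > 1" unfolding s_def using \<alpha> by simp
  have s2: "s^2 = 1 + \<alpha>" unfolding s_def using \<alpha> by simp
  have g1p: "g1 > 0" unfolding g1_def using s1 N by simp
  define T0 where "T0 = nat \<lceil>2/\<alpha> + 1 + 2/(1-\<alpha>) + 2*E/\<alpha> + E/g1\<rceil> + 2"
  have E0: "0 \<le> E" unfolding E_def Kc_def using \<alpha> by simp
  have a1: "0 < 2/\<alpha>" "0 < 2/(1-\<alpha>)" "0 \<le> 2*E/\<alpha>" "0 \<le> E/g1" using \<alpha> E0 g1p by auto
  show ?thesis
  proof (intro exI[of _ T0] allI impI notI)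
    fix T assume T: "T \<ge> T0" and Z: "\<alpha> * real T \<in> \<int>"
    assume "\<exists>p \<sigma>. user_pmf N p \<and> feasible N T \<alpha> \<sigma> \<and>
                 (\<forall>p'. user_pmf N p' \<longrightarrow> payoff N T p \<sigma> \<le> payoff N T p' \<sigma>) \<and>
                 (\<forall>\<sigma>'. feasible N T \<alpha> \<sigma>' \<longrightarrow> payoff N T p \<sigma>' \<le> payoff N T p \<sigma>)"
    then obtain p \<sigma> where p: "user_pmf N p" and fe: "feasible N T \<alpha> \<sigma>"
      and bs: "\<forall>p'. user_pmf N p' \<longrightarrow> payoff N T p \<sigma> \<le> payoff N T p' \<sigma>"
      and ad: "\<forall>\<sigma>'. feasible N T \<alpha> \<sigma>' \<longrightarrow> payoff N T p \<sigma>' \<le> payoff N T p \<sigma>" by blast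
    have TT: "real T \<ge> 2/\<alpha> + 1 + 2/(1-\<alpha>) + 2*E/\<alpha> + E/g1 + 1"
    proof -
      have "real T0 \<ge> 2/\<alpha> + 1 + 2/(1-\<alpha>) + 2*E/\<alpha> + E/g1 + 2"
        unfolding T0_def by linarith
      then show ?thesis using T by linarith
    qed
    have Tb1: "real T \<ge> 2/\<alpha>" "real T \<ge> 1 + 2/(1-\<alpha>)" "real T > 2*E/\<alpha>" "real T > E/g1"
      using TT a1 by linarith+
    have T1: "T \<ge> 1" using Tb1(2) a1 by linarith
    obtain z where z: "\<alpha> * real T = of_int z" using Z by (auto elim: Ints_cases)
    define B where "B = nat z"
    have z0: "z \<ge> 0"
    proof -
      have "0 \<le> \<alpha> * real T" using \<alpha> by simp
      then have "(0::real) \<le> of_int z" using z by simp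
      then show ?thesis by simp
    qed
    have B: "real B = \<alpha> * real T" unfolding B_def using z z0 by simp
    have aT2: "\<alpha> * real T \<ge> 2"
    proof -
      have "\<alpha> * real T \<ge> \<alpha> * (2/\<alpha>)" using Tb1(1) \<alpha> by (intro mult_left_mono) auto
      then show ?thesis using \<alpha> by simp
    qed
    have B2: "B \<ge> 2" using B aT2 by linarith
    have TB: "real T - real B = (1 - \<alpha>) * real T" using B by (simp add: algebra_simps)
    have oT: "(1 - \<alpha>) * real T \<ge> 2 + (1 - \<alpha>)"
    proof -
      have "(1 - \<alpha>) * real T \<ge> (1 - \<alpha>) * (1 + 2/(1-\<alpha>))" using Tb1(2) \<alpha> by (intro mult_left_mono) auto
      also have "(1 - \<alpha>) * (1 + 2/(1-\<alpha>)) = 2 + (1 - \<alpha>)" using \<alpha> by (simp add: field_simps)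
      finally show ?thesis .
    qed
    define c where "c = (T - B) div 2"
    have BT: "B \<le> T"
    proof -
      have "\<alpha> * real T \<le> real T" using \<alpha> by (simp add: mult_left_le_one_le)
      then have "real B \<le> real T" using B by simp
      then show ?thesis by simp
    qed
    have c2: "2 * real c \<ge> real T - real B - 1"
    proof -
      have "2 * c + 1 \<ge> T - B" unfolding c_def by presburger
      then show ?thesis using BT by linarith
    qed
    have c1: "1 \<le> c" using c2 TB oT \<alpha> by linarith
    have Kcc: "real B + 1 \<le> Kc * real c"
    proof -
      have "Kc * real c = (2/(1-\<alpha>)) * (2 * real c)" unfolding Kc_def by simp
      also have "\<dots> \<ge> (2/(1-\<alpha>)) * ((1 - \<alpha>) * real T - 1)"
        using c2 TB \<alpha> by (intro mult_left_mono) auto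
      also have "(2/(1-\<alpha>)) * ((1 - \<alpha>) * real T - 1) = 2 * real T - 2/(1-\<alpha>)"
        using \<alpha> by (simp add: field_simps)
      finally have "Kc * real c \<ge> 2 * real T - 2/(1-\<alpha>)" .
      moreover have "real B + 1 \<le> real T + 1" using BT by simp
      ultimately show ?thesis using Tb1(2) by linarith
    qed
    obtain \<sigma>' where fe': "feasible N T \<alpha> \<sigma>'" and LB:
      "(\<Sum>i<N. FF (pmf p i) (\<sigma>' i) T) \<ge> real N ^ 2 * real T + real N * real B + real B * (real B - 1) / 2 - E"
      using lower_bound[OF N \<alpha> B p c_def c1 Kcc \<kappa>_def] unfolding E_def by blast
    obtain p' where p': "user_pmf N p'" and UB: "(\<Sum>i<N. FF (pmf p' i) (\<sigma> i) T) \<le>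
       max ((s + real N - 1)^2 * real T + real B * (real B - 1) / 2)
           (real N ^ 2 * real T + real N * real B + real B * (real B - 2) / 2)"
      using upper_bound[OF N \<alpha> T1 fe B B2] unfolding s_def by blast
    have "payoff N T p \<sigma>' \<le> payoff N T p' \<sigma>" using ad fe' bs p' by (meson order_trans)
    then have "(\<Sum>i<N. FF (pmf p i) (\<sigma>' i) T) / (real T * real N) \<le> (\<Sum>i<N. FF (pmf p' i) (\<sigma> i) T) / (real T * real N)"
      using payoff_eq[OF p, of T \<sigma>'] payoff_eq[OF p', of T \<sigma>] N T1 by simp
    then have le: "(\<Sum>i<N. FF (pmf p i) (\<sigma>' i) T) \<le> (\<Sum>i<N. FF (pmf p' i) (\<sigma> i) T)"
      using N T1 by (simp add: divide_le_cancel)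
    have g2: "real B / 2 > E"
    proof -
      have "\<alpha> * real T > \<alpha> * (2*E/\<alpha>)" using Tb1(3) \<alpha> by (intro mult_strict_left_mono) auto
      then show ?thesis using \<alpha> B by simp
    qed
    have c1': "real N ^ 2 * real T + real N * real B + real B * (real B - 1) / 2 - E >
               real N ^ 2 * real T + real N * real B + real B * (real B - 2) / 2"
    proof -
      have "real B * (real B - 1) / 2 = real B * (real B - 2) / 2 + real B / 2" by (simp add: field_simps)
      then show ?thesis using g2 by linarith
    qed
    have c2': "real N ^ 2 * real T + real N * real B + real B * (real B - 1) / 2 - E >
               (s + real N - 1)^2 * real T + real B * (real B - 1) / 2"
    proof -
      have al: "\<alpha> = s^2 - 1" using s2 by simp
      have "real N ^ 2 * real T + real N * real B - (s + real N - 1)^2 * real T = g1 * real T"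
        unfolding g1_def B al by (simp add: power2_eq_square algebra_simps)
      moreover have "g1 * real T > E"
      proof -
        have "g1 * real T > g1 * (E/g1)" using Tb1(4) g1p by (intro mult_strict_left_mono) auto
        then show ?thesis using g1p by simp
      qed
      ultimately show ?thesis by linarith
    qed
    have "max ((s + real N - 1)^2 * real T + real B * (real B - 1) / 2)
           (real N ^ 2 * real T + real N * real B + real B * (real B - 2) / 2)
          < real N ^ 2 * real T + real N * real B + real B * (real B - 1) / 2 - E"
      using c1' c2' by (simp only: max_less_iff_conj)
    then show False using le LB UB by linarith
  qed
qed

end
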